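(* Let $\mathbb F$ be algebraically closed with $\operatorname{char}\mathbb F\ne2$, and let $a,b,c,\nu\in\mathbb F$. There exists an $\Re$-module $M_\nu(a,b,c)$ with an $\mathbb F$-basis $\{m_i\}_{i=0}^\infty$ such that $Am_i=\theta_im_i+m_{i+1}$ for all $i\ge0$, $Bm_0=\theta_0^*m_0$, $Bm_i=\theta_i^*m_i+\varphi_im_{i-1}$ for all $i\ge1$, and on which $\alpha,\beta,\delta$ act as scalar multiplication by $\zeta,\zeta^*,\eta$, respectively.
   Context: The Racah algebra $\Re$ is the unital associative $\mathbb F$-algebra with generators $A,B,C,D$ and relations $[A,B]=[B,C]=[C,A]=2D$ together with the requirement that each of $\alpha:=[A,D]+AC-BA$, $\beta:=[B,D]+BA-CB$, $\gamma:=[C,D]+CB-AC$ is central in $\Re$; $\delta:=A+B+C$. For $a,b,c,\nu\in\mathbb F$ and $i\in\mathbb Z$: $\theta_i=(a+\tfrac\nu2-i)(a+\tfrac\nu2-i+1)$, $\theta_i^*=(b+\tfrac\nu2-i)(b+\tfrac\nu2-i+1)$, $\varphi_i=i(i-\nu-1)(a+b+c+\tfrac\nu2-i+2)(a+b-c+\tfrac\nu2-i+1)$, $\zeta=(c-b)(c+b+1)(a-\tfrac\nu2)(a+\tfrac\nu2+1)$, $\zeta^*=(a-c)(a+c+1)(b-\tfrac\nu2)(b+\tfrac\nu2+1)$, $\eta=\tfrac\nu2(\tfrac\nu2+1)+a(a+1)+b(b+1)+c(c+1)$. *)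

theory Defs
  imports "HOL-Computational_Algebra.Polynomial"
begin

definition alg_closed :: "'a::field itself \<Rightarrow> bool" where
  "alg_closed _ \<longleftrightarrow> (\<forall>p::'a poly. degree p \<ge> 1 \<longrightarrow> (\<exists>x. poly p x = 0))"

text \<open>F-linear endomorphisms of the vector space F[x]; F[x] has F-basis m_i = x^i = monom 1 i.\<close>
definition flin :: "('a::field poly \<Rightarrow> 'a poly) \<Rightarrow> bool" where
  "flin T \<longleftrightarrow> (\<forall>p q. T (p + q) = T p + T q) \<and> (\<forall>c p. T (smult c p) = smult c (T p))"

definition comm :: "('a::field poly \<Rightarrow> 'a poly) \<Rightarrow> ('a poly \<Rightarrow> 'a poly) \<Rightarrow> 'a poly \<Rightarrow> 'a poly" where
  "comm X Y = (\<lambda>v. X (Y v) - Y (X v))"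

definition r_alpha where "r_alpha A B C D = (\<lambda>v. comm A D v + A (C v) - B (A v))"
definition r_beta  where "r_beta A B C D = (\<lambda>v. comm B D v + B (A v) - C (B v))"
definition r_gamma where "r_gamma A B C D = (\<lambda>v. comm C D v + C (B v) - A (C v))"
definition r_delta where "r_delta A B C = (\<lambda>v. A v + B v + C v)"

text \<open>(A,B,C,D) define a module structure of the Racah algebra on F[x]:
  linear operators satisfying the defining relations, where "alpha, beta, gamma central"
  means their images commute with the images of all generators.\<close>
definition racah_module ::
  "('a::field poly \<Rightarrow> 'a poly) \<Rightarrow> ('a poly \<Rightarrow> 'a poly) \<Rightarrow> ('a poly \<Rightarrow> 'a poly) \<Rightarrow> ('a poly \<Rightarrow> 'a poly) \<Rightarrow> bool" where
  "racah_module A B C D \<longleftrightarrow>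
     flin A \<and> flin B \<and> flin C \<and> flin D \<and>
     comm A B = (\<lambda>v. smult 2 (D v)) \<and> comm B C = (\<lambda>v. smult 2 (D v)) \<and>
     comm C A = (\<lambda>v. smult 2 (D v)) \<and>
     (\<forall>Z \<in> {r_alpha A B C D, r_beta A B C D, r_gamma A B C D}.
        \<forall>X \<in> {A, B, C, D}. comm Z X = (\<lambda>v. 0))"

definition theta :: "'a::field \<Rightarrow> 'a \<Rightarrow> nat \<Rightarrow> 'a" where
  "theta a \<nu> i = (a + \<nu>/2 - of_nat i) * (a + \<nu>/2 - of_nat i + 1)"

definition theta_s :: "'a::field \<Rightarrow> 'a \<Rightarrow> nat \<Rightarrow> 'a" where
  "theta_s b \<nu> i = (b + \<nu>/2 - of_nat i) * (b + \<nu>/2 - of_nat i + 1)"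

definition phi :: "'a::field \<Rightarrow> 'a \<Rightarrow> 'a \<Rightarrow> 'a \<Rightarrow> nat \<Rightarrow> 'a" where
  "phi a b c \<nu> i = of_nat i * (of_nat i - \<nu> - 1) * (a + b + c + \<nu>/2 - of_nat i + 2)
                   * (a + b - c + \<nu>/2 - of_nat i + 1)"

definition zeta :: "'a::field \<Rightarrow> 'a \<Rightarrow> 'a \<Rightarrow> 'a \<Rightarrow> 'a" where
  "zeta a b c \<nu> = (c - b) * (c + b + 1) * (a - \<nu>/2) * (a + \<nu>/2 + 1)"

definition zeta_s :: "'a::field \<Rightarrow> 'a \<Rightarrow> 'a \<Rightarrow> 'a \<Rightarrow> 'a" where
  "zeta_s a b c \<nu> = (a - c) * (a + c + 1) * (b - \<nu>/2) * (b + \<nu>/2 + 1)"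

definition eta :: "'a::field \<Rightarrow> 'a \<Rightarrow> 'a \<Rightarrow> 'a \<Rightarrow> 'a" where
  "eta a b c \<nu> = (\<nu>/2) * (\<nu>/2 + 1) + a * (a + 1) + b * (b + 1) + c * (c + 1)"

end

theory Submission
  imports Defs
begin

definition Eop :: "'a::field poly \<Rightarrow> 'a poly" where "Eop p = pCons 0 (pderiv p)"

lemma coeff_Eop[simp]: "coeff (Eop p) n = of_nat n * coeff p n"
  by (cases n) (simp_all add: Eop_def coeff_pderiv)

definition Aop :: "'a::field \<Rightarrow> 'a poly \<Rightarrow> 'a poly" where
  "Aop s p = pCons 0 p + smult (s*(s+1)) p - smult (2*s+1) (Eop p) + Eop (Eop p)"

definition Lc :: "'a::field \<Rightarrow> 'a poly \<Rightarrow> 'a poly" where "Lc x q = smult x q - Eop q"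

lemma coeff_Lc[simp]: "coeff (Lc x q) n = (x - of_nat n) * coeff q n"
  by (simp add: Lc_def algebra_simps)

definition Bop :: "'a::field \<Rightarrow> 'a \<Rightarrow> 'a \<Rightarrow> 'a \<Rightarrow> 'a poly \<Rightarrow> 'a poly" where
  "Bop t nu u w p = smult (t*(t+1)) p - smult (2*t+1) (Eop p) + Eop (Eop p)
     - Lc nu (Lc u (Lc w (pderiv p)))"

lemma coeff_Aop: "coeff (Aop s p) n = (s - of_nat n) * (s - of_nat n + 1) * coeff p n
   + (case n of 0 \<Rightarrow> 0 | Suc m \<Rightarrow> coeff p m)"
  by (cases n) (simp_all add: Aop_def coeff_pCons algebra_simps)

lemma coeff_Bop: "coeff (Bop t nu u w p) n = (t - of_nat n) * (t - of_nat n + 1) * coeff p n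
   + (of_nat n - nu) * (u - of_nat n) * (w - of_nat n) * of_nat (Suc n) * coeff p (Suc n)"
  by (simp add: Bop_def coeff_pderiv algebra_simps)

lemma Aop_monom: "Aop s (monom 1 i) = smult ((s - of_nat i) * (s - of_nat i + 1)) (monom 1 i) + monom 1 (Suc i)"
  by (auto simp: poly_eq_iff coeff_Aop coeff_monom split: nat.splits)

lemma Bop_monom0: "Bop t nu u w (monom 1 0) = smult ((t - 0) * (t - 0 + 1)) (monom 1 0)"
  by (auto simp: poly_eq_iff coeff_Bop coeff_monom coeff_pCons split: nat.splits)

lemma Bop_monomS: "Bop t nu u w (monom 1 (Suc k)) = smult ((t - of_nat (Suc k)) * (t - of_nat (Suc k) + 1)) (monom 1 (Suc k))
   + smult ((of_nat k - nu) * (u - of_nat k) * (w - of_nat k) * of_nat (Suc k)) (monom 1 k)"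
  by (auto simp: poly_eq_iff coeff_Bop coeff_monom coeff_pCons split: nat.splits)

lemma flin_Aop: "flin (Aop s)"
  unfolding flin_def by (auto simp: poly_eq_iff coeff_Aop algebra_simps split: nat.split)

lemma flin_Bop: "flin (Bop t nu u w)"
  unfolding flin_def by (auto simp: poly_eq_iff coeff_Bop algebra_simps)

lemma flin_zero: "flin T \<Longrightarrow> T 0 = 0"
  unfolding flin_def by (metis smult_0_left)
lemma flin_minus: "flin T \<Longrightarrow> T (- p) = - T p"
  unfolding flin_def by (metis smult_1_left smult_minus_left)
lemma flin_diff: "flin T \<Longrightarrow> T (p - q) = T p - T q"
  by (metis diff_conv_add_uminus flin_def flin_minus)
lemma flin_add: "flin T \<Longrightarrow> T (p + q) = T p + T q"
  unfolding flin_def by blast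
lemma flin_smult: "flin T \<Longrightarrow> T (smult c p) = smult c (T p)"
  unfolding flin_def by blast

lemma flin_sum: "flin T \<Longrightarrow> T (sum f S) = (\<Sum>x\<in>S. T (f x))"
  by (induction S rule: infinite_finite_induct) (auto simp: flin_zero flin_add)

lemma flin_ext:
  assumes "flin T" "\<And>i. T (monom 1 i) = smult z (monom 1 i)"
  shows "T p = smult z p"
proof -
  have "p = (\<Sum>i\<le>degree p. smult (coeff p i) (monom 1 i))"
    by (simp add: smult_monom poly_as_sum_of_monoms)
  then have "T p = (\<Sum>i\<le>degree p. smult (coeff p i) (T (monom 1 i)))"
    by (metis (no_types, lifting) assms(1) flin_smult flin_sum sum.cong)
  also have "\<dots> = (\<Sum>i\<le>degree p. smult z (smult (coeff p i) (monom 1 i)))"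
    by (simp add: assms(2) mult_ac)
  also have "\<dots> = smult z (\<Sum>i\<le>degree p. smult (coeff p i) (monom 1 i))"
    by (rule flin_sum[symmetric]) (simp add: flin_def smult_add_right mult.commute)
  finally show ?thesis
    by (simp add: smult_monom poly_as_sum_of_monoms)
qed

lemmas Alin = flin_add[OF flin_Aop] flin_diff[OF flin_Aop] flin_smult[OF flin_Aop] flin_minus[OF flin_Aop]
lemmas Blin = flin_add[OF flin_Bop] flin_diff[OF flin_Bop] flin_smult[OF flin_Bop] flin_minus[OF flin_Bop]

lemma alpha_monom:
  fixes a b c h q :: "'a::field"
  assumes q: "2*q = 1"
  defines "A \<equiv> Aop (a+h)" and "B \<equiv> Bop (b+h) (2*h) (a+b+c+h+1) (a+b-c+h)"
  defines "et \<equiv> h*(h+1) + a*(a+1) + b*(b+1) + c*(c+1)"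
  shows "smult q (A(A(B v)) - A(B(A v))) - smult q (A(B(A v)) - B(A(A v)))
     + smult et (A v) - A(A v) - A(B v) - B(A v) = smult ((c - b) * (c + b + 1) * (a - h) * (a + h + 1)) v"
proof (rule flin_ext[where T="\<lambda>v. smult q (A(A(B v)) - A(B(A v))) - smult q (A(B(A v)) - B(A(A v)))
     + smult et (A v) - A(A v) - A(B v) - B(A v)"])
  show "flin (\<lambda>v. smult q (A(A(B v)) - A(B(A v))) - smult q (A(B(A v)) - B(A(A v)))
     + smult et (A v) - A(A v) - A(B v) - B(A v))"
    unfolding flin_def A_def B_def by (simp add: Alin Blin algebra_simps smult_add_right smult_diff_right)
  fix i
  show "smult q (A(A(B (monom 1 i))) - A(B(A (monom 1 i)))) - smult q (A(B(A (monom 1 i))) - B(A(A (monom 1 i))))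
     + smult et (A (monom 1 i)) - A(A (monom 1 i)) - A(B (monom 1 i)) - B(A (monom 1 i)) = smult ((c - b) * (c + b + 1) * (a - h) * (a + h + 1)) (monom 1 i)"
  proof (cases i)
    case 0
    show ?thesis using q unfolding 0 A_def B_def et_def
      apply (simp only: Alin Blin Aop_monom Bop_monom0 Bop_monomS One_nat_def)
      apply (rule poly_eqI)
      apply (auto simp: coeff_monom coeff_pCons split: nat.split if_splits)
      apply algebra+
      done
  next
    case (Suc j)
    show ?thesis
    proof (cases j)
      case 0
      show ?thesis using q unfolding Suc 0 A_def B_def et_def
        apply (simp only: Alin Blin Aop_monom Bop_monom0 Bop_monomS One_nat_def)
        apply (rule poly_eqI)
        apply (auto simp: coeff_monom coeff_pCons split: nat.split if_splits)
        apply algebra+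
        done
    next
      case (Suc k)
      show ?thesis using q unfolding \<open>i = Suc j\<close> Suc A_def B_def et_def
        apply (simp only: Alin Blin Aop_monom Bop_monom0 Bop_monomS)
        apply (rule poly_eqI)
        apply (auto simp: coeff_monom split: if_splits)
        apply algebra+
        done
    qed
  qed
qed
lemma beta_monom:
  fixes a b c h q :: "'a::field"
  assumes q: "2*q = 1"
  defines "A \<equiv> Aop (a+h)" and "B \<equiv> Bop (b+h) (2*h) (a+b+c+h+1) (a+b-c+h)"
  defines "et \<equiv> h*(h+1) + a*(a+1) + b*(b+1) + c*(c+1)"
  shows "smult q (B(A(B v)) - B(B(A v))) - smult q (A(B(B v)) - B(A(B v)))
     + B(A v) - smult et (B v) + A(B v) + B(B v) = smult ((a - c) * (a + c + 1) * (b - h) * (b + h + 1)) v"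
proof (rule flin_ext[where T="\<lambda>v. smult q (B(A(B v)) - B(B(A v))) - smult q (A(B(B v)) - B(A(B v)))
     + B(A v) - smult et (B v) + A(B v) + B(B v)"])
  show "flin (\<lambda>v. smult q (B(A(B v)) - B(B(A v))) - smult q (A(B(B v)) - B(A(B v)))
     + B(A v) - smult et (B v) + A(B v) + B(B v))"
    unfolding flin_def A_def B_def by (simp add: Alin Blin algebra_simps smult_add_right smult_diff_right)
  fix i
  show "smult q (B(A(B (monom 1 i))) - B(B(A (monom 1 i)))) - smult q (A(B(B (monom 1 i))) - B(A(B (monom 1 i))))
     + B(A (monom 1 i)) - smult et (B (monom 1 i)) + A(B (monom 1 i)) + B(B (monom 1 i)) = smult ((a - c) * (a + c + 1) * (b - h) * (b + h + 1)) (monom 1 i)"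
  proof (cases i)
    case 0
    show ?thesis using q unfolding 0 A_def B_def et_def
      apply (simp only: Alin Blin Aop_monom Bop_monom0 Bop_monomS One_nat_def)
      apply (rule poly_eqI)
      apply (auto simp: coeff_monom coeff_pCons split: nat.split if_splits)
      apply algebra+
      done
  next
    case (Suc j)
    show ?thesis
    proof (cases j)
      case 0
      show ?thesis using q unfolding Suc 0 A_def B_def et_def
        apply (simp only: Alin Blin Aop_monom Bop_monom0 Bop_monomS One_nat_def)
        apply (rule poly_eqI)
        apply (auto simp: coeff_monom coeff_pCons split: nat.split if_splits)
        apply algebra+
        done
    next
      case (Suc k)
      show ?thesis using q unfolding \<open>i = Suc j\<close> Suc A_def B_def et_def
        apply (simp only: Alin Blin Aop_monom Bop_monom0 Bop_monomS)
        apply (rule poly_eqI)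
        apply (auto simp: coeff_monom split: if_splits)
        apply algebra+
        done
    qed
  qed
qed

theorem proposition3p1:
  fixes a b c \<nu> :: "'a::field"
  assumes "alg_closed TYPE('a)"
    and two: "(2::'a) \<noteq> 0"
  shows "\<exists>A B C D :: 'a poly \<Rightarrow> 'a poly.
           racah_module A B C D \<and>
           (\<forall>i. A (monom 1 i) = smult (theta a \<nu> i) (monom 1 i) + monom 1 (Suc i)) \<and>
           B (monom 1 0) = smult (theta_s b \<nu> 0) (monom 1 0) \<and>
           (\<forall>i\<ge>1. B (monom 1 i) = smult (theta_s b \<nu> i) (monom 1 i)
                                   + smult (phi a b c \<nu> i) (monom 1 (i - 1))) \<and>
           (\<forall>v. r_alpha A B C D v = smult (zeta a b c \<nu>) v) \<and>
           (\<forall>v. r_beta A B C D v = smult (zeta_s a b c \<nu>) v) \<and>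
           (\<forall>v. r_delta A B C v = smult (eta a b c \<nu>) v)"
proof -
  define h where "h = \<nu>/2"
  define q :: 'a where "q = 1/2"
  have q: "2*q = 1" using two by (simp add: q_def)
  have nu: "\<nu> = 2*h" using two by (simp add: h_def)
  define A where "A = Aop (a+h)"
  define B where "B = Bop (b+h) (2*h) (a+b+c+h+1) (a+b-c+h)"
  define et where "et = h*(h+1) + a*(a+1) + b*(b+1) + c*(c+1)"
  define C where "C = (\<lambda>v. smult et v - A v - B v)"
  define D where "D = (\<lambda>v. smult q (A (B v) - B (A v)))"
  have fA: "flin A" unfolding A_def by (rule flin_Aop)
  have fB: "flin B" unfolding B_def by (rule flin_Bop)
  note lin = flin_add[OF fA] flin_diff[OF fA] flin_smult[OF fA] flin_minus[OF fA]
     flin_add[OF fB] flin_diff[OF fB] flin_smult[OF fB] flin_minus[OF fB]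
  have fC: "flin C" unfolding C_def flin_def by (simp add: lin algebra_simps smult_add_right smult_diff_right)
  have fD: "flin D" unfolding D_def flin_def by (simp add: lin algebra_simps smult_add_right smult_diff_right)
  note linD = flin_add[OF fD] flin_diff[OF fD] flin_smult[OF fD] flin_minus[OF fD]
  have al: "r_alpha A B C D v = smult (zeta a b c \<nu>) v" for v
  proof -
    have "r_alpha A B C D v = smult q (A(A(B v)) - A(B(A v))) - smult q (A(B(A v)) - B(A(A v)))
     + smult et (A v) - A(A v) - A(B v) - B(A v)"
      unfolding r_alpha_def comm_def C_def D_def by (simp add: lin)
    also have "\<dots> = smult ((c - b) * (c + b + 1) * (a - h) * (a + h + 1)) v"
      unfolding A_def B_def et_def by (rule alpha_monom[OF q])
    finally show ?thesis by (simp add: zeta_def h_def)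
  qed
  have be: "r_beta A B C D v = smult (zeta_s a b c \<nu>) v" for v
  proof -
    have "r_beta A B C D v = smult q (B(A(B v)) - B(B(A v))) - smult q (A(B(B v)) - B(A(B v)))
     + B(A v) - smult et (B v) + A(B v) + B(B v)"
      unfolding r_beta_def comm_def C_def D_def by (simp add: lin)
    also have "\<dots> = smult ((a - c) * (a + c + 1) * (b - h) * (b + h + 1)) v"
      unfolding A_def B_def et_def by (rule beta_monom[OF q])
    finally show ?thesis by (simp add: zeta_s_def h_def)
  qed
  have ga: "r_gamma A B C D v = smult (- zeta a b c \<nu> - zeta_s a b c \<nu>) v" for v
  proof -
    have "r_gamma A B C D v + r_alpha A B C D v + r_beta A B C D v = 0"
      unfolding r_alpha_def r_beta_def r_gamma_def comm_def C_def
      by (simp add: linD lin algebra_simps)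
    then have "r_gamma A B C D v = - (r_alpha A B C D v + r_beta A B C D v)"
      by (metis add.assoc eq_neg_iff_add_eq_0)
    then show ?thesis using al[of v] be[of v] by (simp add: smult_diff_left)
  qed
  have cen: "comm (\<lambda>v. smult z v) X = (\<lambda>v. 0)" if "flin X" for z X
    using that unfolding comm_def flin_def by auto
  have rm: "racah_module A B C D"
    unfolding racah_module_def
  proof (intro conjI ballI)
    show "comm A B = (\<lambda>v. smult 2 (D v))" "comm B C = (\<lambda>v. smult 2 (D v))" "comm C A = (\<lambda>v. smult 2 (D v))"
      using q unfolding comm_def D_def C_def by (auto simp: lin algebra_simps)
    fix Z X
    assume Z: "Z \<in> {r_alpha A B C D, r_beta A B C D, r_gamma A B C D}" and X: "X \<in> {A, B, C, D}"
    then have fX: "flin X" using fA fB fC fD by auto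
    have alf: "r_alpha A B C D = smult (zeta a b c \<nu>)" by (rule ext) (fact al)
    have bef: "r_beta A B C D = smult (zeta_s a b c \<nu>)" by (rule ext) (fact be)
    have gaf: "r_gamma A B C D = smult (- zeta a b c \<nu> - zeta_s a b c \<nu>)" by (rule ext) (fact ga)
    have "\<exists>z. Z = (\<lambda>v. smult z v)" using Z alf bef gaf by blast
    then show "comm Z X = (\<lambda>v. 0)" using cen fX by auto
  qed (fact fA fB fC fD)+
  show ?thesis
  proof (intro exI conjI allI impI)
    show "racah_module A B C D" by (fact rm)
    show "A (monom 1 i) = smult (theta a \<nu> i) (monom 1 i) + monom 1 (Suc i)" for i
      unfolding A_def Aop_monom theta_def h_def by (simp add: add.assoc)
    show "B (monom 1 0) = smult (theta_s b \<nu> 0) (monom 1 0)"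
      unfolding B_def Bop_monom0 theta_s_def h_def by (simp add: add.assoc)
    show "B (monom 1 i) = smult (theta_s b \<nu> i) (monom 1 i) + smult (phi a b c \<nu> i) (monom 1 (i - 1))"
      if i1: "1 \<le> i" for i
    proof -
      obtain k where k: "i = Suc k" using i1 by (cases i) auto
      have "phi a b c \<nu> (Suc k) = (of_nat k - 2*h) * (a+b+c+h+1 - of_nat k) * (a+b-c+h - of_nat k) * of_nat (Suc k)"
        unfolding phi_def h_def[symmetric] unfolding nu of_nat_Suc by algebra
      then show ?thesis unfolding k B_def Bop_monomS theta_s_def h_def
        by (simp add: add.assoc h_def)
    qed
    show "r_alpha A B C D v = smult (zeta a b c \<nu>) v" for v by (fact al)
    show "r_beta A B C D v = smult (zeta_s a b c \<nu>) v" for v by (fact be)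
    show "r_delta A B C v = smult (eta a b c \<nu>) v" for v
      unfolding r_delta_def C_def eta_def et_def h_def by simp
  qed
qed

end
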